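(* Let $A=(a_{ij})$ be a real $n\times n$ matrix with nonnegative entries, $\mathbf 1=(1,\ldots,1)^{\mathrm T}$, and $L=\operatorname{diag}(A\mathbf 1)-A$, and assume that $0$ is an eigenvalue of $L$ of algebraic multiplicity at least $2$. Let $S$ be the orthogonal projection of $\mathbb R^n$ onto $\mathcal R(L)\oplus\operatorname{span}(\mathbf 1)$ and, for $\tau>0$, let $\widetilde L(\tau)=\tau^{-1}(I-S)+LS$. Then $\|\widetilde L(\tau)-L\|_E$ decreases as $\tau>0$ increases, and its infimum over $\tau>0$ is $\|LS-L\|_E$. Moreover, over the range $0<\tau\le\bigl(\max_i\sum_{j\neq i}a_{ij}\bigr)^{-1}$, the smallest value of $\|\widetilde L(\tau)-L\|_E$ is attained at $\tau=\bigl(\max_i\sum_{j\neq i}a_{ij}\bigr)^{-1}$.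
   Context: $\|X\|_E$ denotes the Euclidean (Frobenius) norm $\sqrt{\operatorname{trace}(XX^{\mathrm T})}$. $\mathcal R(L)$ is the range of $L$. The condition $0<\tau\le(\max_i\sum_{j\ne i}a_{ij})^{-1}$ is the condition for $I-\tau L$ to be row stochastic. *)

theory Defs
  imports "HOL-Analysis.Analysis" "HOL-Computational_Algebra.Polynomial"
begin

definition frob_norm :: "real^'n^'n \<Rightarrow> real" where
  "frob_norm X = sqrt (trace (X ** transpose X))"

definition laplacian :: "real^'n^'n \<Rightarrow> real^'n^'n" where
  "laplacian A = (\<chi> i j. (if i = j then (A *v vec 1) $ i else 0) - A $ i $ j)"

definition char_poly_mat :: "real^'n^'n \<Rightarrow> real poly" where
  "char_poly_mat M = det (\<chi> i j. (if i = j then [:0, 1:] else 0) - [: M $ i $ j :])"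

definition alg_mult :: "real \<Rightarrow> real^'n^'n \<Rightarrow> nat" where
  "alg_mult c M = order c (char_poly_mat M)"

definition is_orth_proj :: "real^'n^'n \<Rightarrow> (real^'n) set \<Rightarrow> bool" where
  "is_orth_proj S V \<longleftrightarrow> (\<forall>x. S *v x \<in> V \<and> (\<forall>v\<in>V. (x - S *v x) \<bullet> v = 0))"

definition Ltilde :: "real \<Rightarrow> real^'n^'n \<Rightarrow> real^'n^'n \<Rightarrow> real^'n^'n" where
  "Ltilde \<tau> S L = (inverse \<tau>) *\<^sub>R (mat 1 - S) + L ** S"

end

theory Submission imports Defs begin

lemma det_poly: "poly (det (M::real poly^'n^'n)) x = det (\<chi> i j. poly (M$i$j) x)"
  unfolding det_def by (simp add: poly_sum poly_prod)

lemma lap_rowsum: "(\<Sum>j\<in>UNIV. laplacian A $ i $ j) = (0::real)"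
proof -
  have "(\<Sum>j\<in>UNIV. laplacian A $ i $ j) = (\<Sum>j\<in>UNIV. (if i = j then (A *v vec 1) $ i else 0)) - (\<Sum>j\<in>UNIV. A $ i $ j)"
    by (simp add: laplacian_def sum_subtractf)
  also have "\<dots> = 0" by (simp add: matrix_vector_mult_def)
  finally show ?thesis .
qed

lemma lap_colsum: "(\<Sum>k\<in>UNIV. column k (laplacian A)) = (0::real^'n)"
  by (simp add: vec_eq_iff sum_component column_def lap_rowsum)

lemma key:
  fixes A :: "real^'n^'n"
  assumes m: "alg_mult 0 (laplacian A) \<ge> 2"
  shows "span (range (\<lambda>x. laplacian A *v x) \<union> {vec 1}) \<noteq> UNIV"
proof
  assume sp: "span (range (\<lambda>x. laplacian A *v x) \<union> {vec 1}) = UNIV"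
  define L where "L = laplacian A"
  define X where "X = ([:0,1:] :: real poly)"
  define M where "M = (\<chi> i j. (if i = j then X else 0) - [: L $ i $ j :])"
  define T where "T = transpose M"
  define i0 :: 'n where "i0 = undefined"
  define N where "N = (\<chi> k. if k = i0 then vec 1 else row k T)"
  have cp: "char_poly_mat L = det T"
    unfolding T_def M_def X_def char_poly_mat_def by simp
  have rs: "(\<Sum>j\<in>UNIV. row j T) = X *s vec 1"
  proof -
    have "(\<Sum>j\<in>UNIV. M $ i $ j) = X" for i
    proof -
      have "(\<Sum>j\<in>UNIV. M $ i $ j) = (\<Sum>j\<in>UNIV. (if i = j then X else 0)) - (\<Sum>j\<in>UNIV. [: L $ i $ j :])"
        by (simp add: M_def sum_subtractf)
      also have "(\<Sum>j\<in>UNIV. [: L $ i $ j :]) = [: \<Sum>j\<in>UNIV. L $ i $ j :]"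
        by (simp add: sum_to_poly)
      also have "\<dots> = 0" using lap_rowsum[of A i] by (simp add: L_def)
      finally show ?thesis by simp
    qed
    then show ?thesis by (simp add: vec_eq_iff sum_component row_def T_def transpose_def)
  qed
  have "det T = det (\<chi> k. if k = i0 then (\<Sum>j\<in>UNIV. row j T) else row k T)"
  proof -
    have "det (\<chi> k. if k = i0 then (\<Sum>j\<in>UNIV. row j T) else row k T)
        = (\<Sum>j\<in>UNIV. det (\<chi> k. if k = i0 then row j T else row k T))"
      by (rule det_linear_row_sum) simp
    also have "\<dots> = (\<Sum>j\<in>{i0}. det (\<chi> k. if k = i0 then row j T else row k T))"
    proof (rule sum.mono_neutral_right)
      show "\<forall>j\<in>UNIV - {i0}. det (\<chi> k. if k = i0 then row j T else row k T) = 0"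
      proof
        fix j assume j: "j \<in> UNIV - {i0}"
        show "det (\<chi> k. if k = i0 then row j T else row k T) = 0"
          by (rule det_identical_rows[of i0 j]) (use j in \<open>auto simp: row_def vec_eq_iff\<close>)
      qed
    qed auto
    also have "\<dots> = det T"
    proof -
      have "(\<chi> k. if k = i0 then row i0 T else row k T) = T"
        by (simp add: row_def vec_eq_iff)
      then show ?thesis by simp
    qed
    finally show ?thesis by simp
  qed
  also have "\<dots> = X * det N"
    unfolding rs N_def by (rule det_row_mul)
  finally have dT: "det T = X * det N" .
  have "[:-0, 1:] ^ order 0 (char_poly_mat L) dvd char_poly_mat L"
    by (rule order_1)
  moreover have "[:-0, 1:] ^ 2 dvd [:-0, 1:] ^ order 0 (char_poly_mat L)"
    using m by (simp add: alg_mult_def L_def le_imp_power_dvd)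
  ultimately have "X * X dvd X * det N"
    using dvd_trans cp dT by (metis X_def minus_zero power2_eq_square)
  moreover have "X \<noteq> 0" by (simp add: X_def)
  ultimately have "X dvd det N" by (metis dvd_mult_cancel_left)
  then have "poly (det N) 0 = 0" by (simp add: X_def dvd_iff_poly_eq_0)
  then have d0: "det (\<chi> i j. poly (N$i$j) 0) = 0" by (simp add: det_poly)
  define N0 where "N0 = (\<chi> i j. poly (N$i$j) 0)"
  have N0: "N0 = (\<chi> k. if k = i0 then vec 1 else - column k L)"
    by (simp add: N0_def N_def vec_eq_iff row_def T_def M_def column_def X_def transpose_def)
  have rowsN: "row k N0 = (if k = i0 then vec 1 else - column k L)" for k
    by (simp add: N0 row_def vec_eq_iff)
  have inR: "vec 1 \<in> span (rows N0)"
    by (rule span_base) (metis (mono_tags, lifting) rowsN rows_def UNIV_I mem_Collect_eq)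
  have colR: "column k L \<in> span (rows N0)" if "k \<noteq> i0" for k
  proof -
    have "row k N0 \<in> span (rows N0)"
      by (rule span_base) (auto simp: rows_def)
    then have "- (- column k L) \<in> span (rows N0)" using that rowsN span_neg by metis
    then show ?thesis by simp
  qed
  have colR': "column k L \<in> span (rows N0)" for k
  proof (cases "k = i0")
    case True
    have "(\<Sum>j\<in>UNIV. column j L) = column i0 L + (\<Sum>j\<in>UNIV-{i0}. column j L)"
      by (simp add: sum.remove)
    then have "column i0 L = - (\<Sum>j\<in>UNIV-{i0}. column j L)"
      using lap_colsum[of A] by (simp add: L_def eq_neg_iff_add_eq_0)
    moreover have "(\<Sum>j\<in>UNIV-{i0}. column j L) \<in> span (rows N0)"
      by (rule span_sum) (auto intro: colR)
    ultimately show ?thesis using True span_neg by metis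
  qed (rule colR)
  have "range (\<lambda>x. laplacian A *v x) \<union> {vec 1} \<subseteq> span (rows N0)"
  proof -
    have "L *v x \<in> span (rows N0)" for x
      unfolding matrix_mult_sum scalar_mult_eq_scaleR by (intro span_sum span_scale colR')
    then show ?thesis using inR by (auto simp: L_def)
  qed
  then have "span (rows N0) = UNIV" using sp
    by (metis span_minimal subspace_span top.extremum_uniqueI)
  then obtain B where "B ** N0 = mat 1" using matrix_left_invertible_span_rows by blast
  then have "det B * det N0 = 1" by (metis det_I det_mul)
  then show False using d0 N0_def by simp
qed


lemma frob_cols: "frob_norm (X::real^'n^'n) = sqrt (\<Sum>k\<in>UNIV. norm (column k X)^2)"
proof -
  have "trace (X ** transpose X) = (\<Sum>i\<in>UNIV. \<Sum>k\<in>UNIV. X$i$k * X$i$k)"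
    by (simp add: trace_def matrix_matrix_mult_def transpose_def)
  also have "\<dots> = (\<Sum>k\<in>UNIV. \<Sum>i\<in>UNIV. X$i$k * X$i$k)" by (rule sum.swap)
  also have "\<dots> = (\<Sum>k\<in>UNIV. norm (column k X)^2)"
    by (simp add: power2_norm_eq_inner inner_vec_def column_def)
  finally show ?thesis by (simp add: frob_norm_def)
qed

lemma col_Lt:
  fixes L S :: "real^'n^'n"
  shows "column k (Ltilde \<tau> S L - L) = inverse \<tau> *\<^sub>R (axis k 1 - S *v axis k 1) - L *v (axis k 1 - S *v axis k 1)"
proof -
  have "column k (Ltilde \<tau> S L - L) = (Ltilde \<tau> S L - L) *v axis k 1"
    by (simp add: matrix_vector_mult_basis)
  also have "\<dots> = inverse \<tau> *\<^sub>R (axis k 1 - S *v axis k 1) - L *v (axis k 1 - S *v axis k 1)"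
    by (simp add: Ltilde_def matrix_vector_mult_add_rdistrib matrix_vector_mult_diff_rdistrib
        scaleR_matrix_vector_assoc[symmetric] matrix_vector_mul_assoc matrix_vector_mult_diff_distrib)
  finally show ?thesis .
qed

lemma col_LS:
  fixes L S :: "real^'n^'n"
  shows "column k (L ** S - L) = - (L *v (axis k 1 - S *v axis k 1))"
proof -
  have "column k (L ** S - L) = (L ** S - L) *v axis k 1"
    by (simp add: matrix_vector_mult_basis)
  also have "\<dots> = - (L *v (axis k 1 - S *v axis k 1))"
    by (simp add: matrix_vector_mult_diff_rdistrib
        matrix_vector_mul_assoc matrix_vector_mult_diff_distrib)
  finally show ?thesis .
qed

lemma norm_expand:
  fixes p q :: "real^'n"
  assumes "inner p q = 0"
  shows "norm (c *\<^sub>R p - q)^2 = c^2 * norm p ^2 + norm q ^2"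
proof -
  have "norm (c *\<^sub>R p - q)^2 = inner (c *\<^sub>R p - q) (c *\<^sub>R p - q)" by (rule power2_norm_eq_inner)
  also have "\<dots> = c^2 * inner p p - 2 * c * inner p q + inner q q"
    by (simp add: inner_diff_left inner_diff_right inner_commute power2_eq_square algebra_simps)
  finally show ?thesis using assms by (simp add: power2_norm_eq_inner)
qed


theorem proposition2:
  fixes A S :: "real^'n^'n"
  assumes nonneg: "\<forall>i j. A $ i $ j \<ge> 0"
    and mult: "alg_mult 0 (laplacian A) \<ge> 2"
    and proj: "is_orth_proj S (span (range (\<lambda>x. laplacian A *v x) \<union> {vec 1}))"
  shows "(\<forall>\<tau>1 \<tau>2. 0 < \<tau>1 \<longrightarrow> \<tau>1 < \<tau>2 \<longrightarrow>
            frob_norm (Ltilde \<tau>2 S (laplacian A) - laplacian A)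
              < frob_norm (Ltilde \<tau>1 S (laplacian A) - laplacian A))
       \<and> (INF \<tau>\<in>{0<..}. frob_norm (Ltilde \<tau> S (laplacian A) - laplacian A))
            = frob_norm (laplacian A ** S - laplacian A)
       \<and> (let m = Max (range (\<lambda>i. \<Sum>j\<in>UNIV - {i}. A $ i $ j)) in
            m > 0 \<longrightarrow>
            (\<forall>\<tau>. 0 < \<tau> \<and> \<tau> \<le> inverse m \<longrightarrow>
               frob_norm (Ltilde (inverse m) S (laplacian A) - laplacian A)
                 \<le> frob_norm (Ltilde \<tau> S (laplacian A) - laplacian A)))"
proof -
  define L where "L = laplacian A"
  define V where "V = span (range (\<lambda>x. laplacian A *v x) \<union> {vec 1})"
  define P where "P k = axis k (1::real) - S *v axis k 1" for k :: 'n
  define a where "a = (\<Sum>k\<in>UNIV. norm (P k)^2)"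
  define b where "b = (\<Sum>k\<in>UNIV. norm (L *v P k)^2)"
  have orth: "inner (P k) (L *v P k) = 0" for k
  proof -
    have "L *v P k \<in> V" unfolding V_def L_def by (rule span_base) auto
    then show ?thesis using proj unfolding is_orth_proj_def V_def P_def by blast
  qed
  have f: "frob_norm (Ltilde \<tau> S L - L) = sqrt ((inverse \<tau>)^2 * a + b)" for \<tau>
    unfolding frob_cols col_Lt
    by (simp add: P_def[symmetric] norm_expand orth a_def b_def sum.distrib sum_distrib_left)
  have f0: "frob_norm (L ** S - L) = sqrt b"
    unfolding frob_cols col_LS by (simp add: P_def[symmetric] b_def)
  have b0: "b \<ge> 0" unfolding b_def by (simp add: sum_nonneg)
  have apos: "a > 0"
  proof (rule ccontr)
    assume "\<not> a > 0"
    then have "a = 0" unfolding a_def by (metis (no_types, lifting) sum_nonneg zero_le_power2 order_neq_le_trans)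
    then have "\<forall>k\<in>UNIV. norm (P k)^2 = 0" unfolding a_def
      by (subst (asm) sum_nonneg_eq_0_iff) auto
    then have ax: "axis k 1 = S *v axis k 1" for k by (simp add: P_def)
    have "axis k 1 \<in> V" for k
      using proj ax unfolding is_orth_proj_def V_def by metis
    then have "(Basis :: (real^'n) set) \<subseteq> V"
      by (auto simp: Basis_vec_def)
    then have "span (Basis :: (real^'n) set) \<subseteq> V"
      by (metis V_def span_minimal subspace_span)
    then have "V = UNIV" by (simp add: top.extremum_uniqueI)
    then show False using key[OF mult] unfolding V_def by simp
  qed
  have mono: "frob_norm (Ltilde \<tau>2 S L - L) < frob_norm (Ltilde \<tau>1 S L - L)"
    if "0 < \<tau>1" "\<tau>1 < \<tau>2" for \<tau>1 \<tau>2
  proof -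
    have "inverse \<tau>2 < inverse \<tau>1" using that by (simp add: less_imp_inverse_less)
    then have "(inverse \<tau>2)^2 < (inverse \<tau>1)^2"
      using that by (intro power_strict_mono) auto
    then have "(inverse \<tau>2)^2 * a + b < (inverse \<tau>1)^2 * a + b" using apos by simp
    then show ?thesis unfolding f by simp
  qed
  have inf: "(INF \<tau>\<in>{0<..}. frob_norm (Ltilde \<tau> S L - L)) = sqrt b"
  proof (rule antisym)
    show "sqrt b \<le> (INF \<tau>\<in>{0<..}. frob_norm (Ltilde \<tau> S L - L))"
      by (rule cINF_greatest) (use apos in \<open>auto simp: f zero_le_mult_iff\<close>)
    show "(INF \<tau>\<in>{0<..}. frob_norm (Ltilde \<tau> S L - L)) \<le> sqrt b"
    proof (rule ccontr)
      assume "\<not> ?thesis"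
      then have lt: "sqrt b < (INF \<tau>\<in>{0<..}. frob_norm (Ltilde \<tau> S L - L))" by simp
      define I where "I = (INF \<tau>\<in>{0<..}. frob_norm (Ltilde \<tau> S L - L))"
      define d where "d = I^2 - b"
      have "sqrt b < I" using lt I_def by simp
      have I0: "0 \<le> I" using \<open>sqrt b < I\<close> real_sqrt_ge_zero[OF b0] by linarith
      have "(sqrt b)^2 < I^2" using b0 I0 \<open>sqrt b < I\<close> by (intro power_strict_mono) auto
      then have "b < I^2" using b0 by simp
      then have dpos: "d > 0" by (simp add: d_def)
      define t where "t = sqrt (a / d) + 1"
      have "sqrt (a/d) \<ge> 0" using apos dpos by simp
      then have tpos: "t > 0" unfolding t_def by linarith
      have "sqrt (a/d) < t" by (simp add: t_def)
      then have "(sqrt (a/d))^2 < t^2" using apos dpos by (intro power_strict_mono) auto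
      then have "a / d < t^2" using apos dpos by simp
      then have "a < t^2 * d" using dpos by (simp add: divide_less_eq)
      then have "a / t^2 < d" using tpos by (simp add: divide_less_eq mult.commute)
      then have lt2: "(inverse t)^2 * a + b < I^2" 
        by (simp add: d_def power_inverse field_simps)
      have "I \<le> frob_norm (Ltilde t S L - L)"
        unfolding I_def by (rule cINF_lower) (use tpos apos b0 in \<open>auto intro!: bdd_belowI[of _ 0] simp: f\<close>)
      also have "\<dots> = sqrt ((inverse t)^2 * a + b)" by (rule f)
      finally have "I^2 \<le> (sqrt ((inverse t)^2 * a + b))^2"
        using \<open>sqrt b < I\<close> I0 by (intro power_mono) auto
      then have "I^2 \<le> (inverse t)^2 * a + b" using apos b0 by simp
      then show False using lt2 by simp
    qed
  qed
  show ?thesis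
    unfolding Let_def L_def[symmetric]
  proof (intro conjI allI impI)
    show "frob_norm (Ltilde \<tau>2 S L - L) < frob_norm (Ltilde \<tau>1 S L - L)"
      if "0 < \<tau>1" "\<tau>1 < \<tau>2" for \<tau>1 \<tau>2 using mono that by blast
    show "(INF \<tau>\<in>{0<..}. frob_norm (Ltilde \<tau> S L - L)) = frob_norm (L ** S - L)"
      using inf f0 by simp
  next
    fix \<tau>
    assume "0 < Max (range (\<lambda>i. \<Sum>j\<in>UNIV - {i}. A $ i $ j))"
      and h: "0 < \<tau> \<and> \<tau> \<le> inverse (Max (range (\<lambda>i. \<Sum>j\<in>UNIV - {i}. A $ i $ j)))"
    define m where "m = Max (range (\<lambda>i. \<Sum>j\<in>UNIV - {i}. A $ i $ j))"
    have h': "0 < \<tau>" "\<tau> \<le> inverse m" using h by (auto simp: m_def)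
    have "frob_norm (Ltilde (inverse m) S L - L) \<le> frob_norm (Ltilde \<tau> S L - L)"
    proof (cases "\<tau> = inverse m")
      case False
      then have "\<tau> < inverse m" using h' by simp
      then show ?thesis using mono[of \<tau> "inverse m"] h' by simp
    qed simp
    then show "frob_norm (Ltilde (inverse (Max (range (\<lambda>i. \<Sum>j\<in>UNIV - {i}. A $ i $ j)))) S L - L)
         \<le> frob_norm (Ltilde \<tau> S L - L)" by (simp add: m_def)
  qed
qed

end
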